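(* Let $\mathcal{A}$ be a toric line arrangement in $\mathbb{T}^2$ consisting of exactly $3$ lines, with $f_0$ vertices and $f_2$ chambers, and suppose $f_0<f_2<2f_0$. Then $f_2-f_0$ divides $f_0$.
   Context: Let $\mathbb{T}^2=\mathbb{R}^2/\mathbb{Z}^2$ with quotient map $\pi:\mathbb{R}^2\to\mathbb{T}^2$. A toric line is the image $\pi(L)$ of a line $L=\{(x,y)\in\mathbb{R}^2: ax+by=c\}$ with $a,b\in\mathbb{Z}$ coprime and $c\in\mathbb{R}$; it is said to be of type $(a,b)$. A toric line arrangement is a finite set $\mathcal{A}=\{l_1,\dots,l_n\}$ of distinct toric lines which is essential, i.e. not all of its lines are of the same type (not all lines are parallel). The vertices of $\mathcal{A}$ are the points of $\mathbb{T}^2$ lying on at least two lines of $\mathcal{A}$; the chambers are the connected components of $\mathbb{T}^2\setminus\bigcup_i l_i$. We write $f_0$ and $f_2$ for the numbers of vertices and chambers. *)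

theory Defs
  imports "HOL-Analysis.Analysis"
begin

text \<open>The torus T^2 = R^2/Z^2, with points represented by their unique
representatives in [0,1) x [0,1); the quotient map is componentwise frac.\<close>

definition torus_map :: "real \<times> real \<Rightarrow> real \<times> real" where
  "torus_map p = (frac (fst p), frac (snd p))"

definition torus_space :: "(real \<times> real) set" where
  "torus_space = {0..<1} \<times> {0..<1}"

definition torus_top :: "(real \<times> real) topology" where
  "torus_top = topology (\<lambda>U. U \<subseteq> torus_space \<and> open (torus_map -` U))"

definition toric_line_of_type :: "(real \<times> real) set \<Rightarrow> int \<Rightarrow> int \<Rightarrow> bool" where
  "toric_line_of_type l a b \<longleftrightarrow> coprime a b \<and>
     (\<exists>c::real. l = torus_map ` {p. of_int a * fst p + of_int b * snd p = c})"

definition toric_line :: "(real \<times> real) set \<Rightarrow> bool" where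
  "toric_line l \<longleftrightarrow> (\<exists>a b. toric_line_of_type l a b)"

text \<open>A toric line arrangement: finite set of distinct toric lines, essential
(not all lines of the same type, i.e. some two lines are not parallel).\<close>
definition toric_arrangement :: "(real \<times> real) set set \<Rightarrow> bool" where
  "toric_arrangement A \<longleftrightarrow> finite A \<and> (\<forall>l\<in>A. toric_line l) \<and>
     (\<exists>l1\<in>A. \<exists>l2\<in>A. \<exists>a1 b1 a2 b2. toric_line_of_type l1 a1 b1 \<and>
        toric_line_of_type l2 a2 b2 \<and> a1 * b2 \<noteq> a2 * b1)"

definition arr_vertices :: "(real \<times> real) set set \<Rightarrow> (real \<times> real) set" where
  "arr_vertices A = {p \<in> torus_space. \<exists>l1\<in>A. \<exists>l2\<in>A. l1 \<noteq> l2 \<and> p \<in> l1 \<and> p \<in> l2}"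

definition arr_chambers :: "(real \<times> real) set set \<Rightarrow> (real \<times> real) set set" where
  "arr_chambers A = connected_components_of (subtopology torus_top (torus_space - \<Union>A))"

definition f0 :: "(real \<times> real) set set \<Rightarrow> nat" where
  "f0 A = card (arr_vertices A)"

definition f2 :: "(real \<times> real) set set \<Rightarrow> nat" where
  "f2 A = card (arr_chambers A)"

end

theory Submission
  imports Defs
begin


lemma components_fibers:
  assumes op: "\<And>x. x \<in> topspace X \<Longrightarrow> openin X {y \<in> topspace X. f y = f x}"
  and co: "\<And>x. x \<in> topspace X \<Longrightarrow> connectedin X {y \<in> topspace X. f y = f x}"
  shows "card (connected_components_of X) = card (f ` topspace X)"
proof -
  have eq: "connected_component_of_set X x = {y \<in> topspace X. f y = f x}" if x: "x \<in> topspace X" for x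
  proof (rule connected_component_of_unique)
    show "x \<in> {y \<in> topspace X. f y = f x}" using x by auto
    show "connectedin X {y \<in> topspace X. f y = f x}" using co x .
    fix C' assume C': "x \<in> C' \<and> connectedin X C'"
    have "topspace X - {y \<in> topspace X. f y = f x} = (\<Union>z\<in>topspace X - {y \<in> topspace X. f y = f x}. {y \<in> topspace X. f y = f z})"
      by auto
    moreover have "openin X (\<Union>z\<in>topspace X - {y \<in> topspace X. f y = f x}. {y \<in> topspace X. f y = f z})"
      using op by (intro openin_Union) auto
    ultimately have "closedin X {y \<in> topspace X. f y = f x}"
      by (simp add: closedin_def)
    then have "C' \<subseteq> {y \<in> topspace X. f y = f x} \<or> disjnt C' {y \<in> topspace X. f y = f x}"
      using connectedin_clopen_cases C' op x by blast
    then show "C' \<subseteq> {y \<in> topspace X. f y = f x}" using C' x by (auto simp: disjnt_def)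
  qed
  have "connected_components_of X = (\<lambda>x. {y \<in> topspace X. f y = f x}) ` topspace X"
    unfolding connected_components_of_def using eq by (auto simp: image_iff)
  also have "\<dots> = (\<lambda>v. {y \<in> topspace X. f y = v}) ` (f ` topspace X)"
    by (auto simp: image_iff)
  finally have *: "connected_components_of X = (\<lambda>v. {y \<in> topspace X. f y = v}) ` (f ` topspace X)" .
  have "inj_on (\<lambda>v. {y \<in> topspace X. f y = v}) (f ` topspace X)"
    by (auto simp: inj_on_def)
  then show ?thesis unfolding * by (rule card_image)
qed

lemma istop_torus: "istopology (\<lambda>U. U \<subseteq> torus_space \<and> open (torus_map -` U))"
  unfolding istopology_def by (auto simp: vimage_Union intro!: open_Union)

lemma openin_torus: "openin torus_top U \<longleftrightarrow> U \<subseteq> torus_space \<and> open (torus_map -` U)"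
  unfolding torus_top_def using istop_torus by simp

lemma torus_map_in: "torus_map p \<in> torus_space"
  by (simp add: torus_map_def torus_space_def frac_lt_1)

lemma topspace_torus: "topspace torus_top = torus_space"
proof -
  have "openin torus_top torus_space"
  proof -
    have "torus_map -` torus_space = UNIV" using torus_map_in by auto
    then show ?thesis unfolding openin_torus by auto
  qed
  then show ?thesis
    by (metis openin_subset openin_torus openin_topspace subset_antisym)
qed

lemma cont_torus_map: "continuous_map euclidean torus_top torus_map"
  unfolding continuous_map_def topspace_torus
  by (auto simp: torus_map_in openin_torus vimage_def)



definition cls :: "'a::ab_group_add set \<Rightarrow> 'a \<Rightarrow> 'a set" where
  "cls H y = (\<lambda>h. y + h) ` H"

definition sgrp :: "'a::ab_group_add set \<Rightarrow> bool" where
  "sgrp H \<longleftrightarrow> 0 \<in> H \<and> (\<forall>x\<in>H. \<forall>y\<in>H. x - y \<in> H)"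

lemma sgrp_add: "sgrp H \<Longrightarrow> x \<in> H \<Longrightarrow> y \<in> H \<Longrightarrow> x + y \<in> H"
  unfolding sgrp_def by (metis diff_0 diff_minus_eq_add)

lemma sgrp_diff: "sgrp H \<Longrightarrow> x \<in> H \<Longrightarrow> y \<in> H \<Longrightarrow> x - y \<in> H"
  unfolding sgrp_def by blast

lemma sgrp_neg: "sgrp H \<Longrightarrow> x \<in> H \<Longrightarrow> - x \<in> H"
  unfolding sgrp_def by (metis diff_0)

lemma cls_self: "sgrp H \<Longrightarrow> y \<in> cls H y"
  unfolding cls_def sgrp_def by (metis add.right_neutral image_eqI)

lemma cls_eq: assumes "sgrp H" shows "cls H x = cls H y \<longleftrightarrow> x - y \<in> H"
proof
  assume "cls H x = cls H y"
  then have "y \<in> cls H x" using cls_self[OF assms] by auto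
  then obtain h where "h \<in> H" "y = x + h" unfolding cls_def by auto
  then show "x - y \<in> H" using sgrp_neg[OF assms] by auto
next
  assume d: "x - y \<in> H"
  have "cls H u \<subseteq> cls H v" if "u - v \<in> H" for u v
  proof
    fix z assume "z \<in> cls H u"
    then obtain h where h: "h \<in> H" "z = u + h" unfolding cls_def by auto
    have e: "z = v + ((u - v) + h)" using h by simp
    have m: "(u - v) + h \<in> H" using sgrp_add[OF assms that h(1)] .
    show "z \<in> cls H v" unfolding cls_def using e m by (rule image_eqI[where f="\<lambda>h. v + h"])
  qed
  moreover have "y - x \<in> H" using sgrp_neg[OF assms d] by simp
  ultimately show "cls H x = cls H y" using d by blast
qed

lemma card_cls_factor:
  fixes L K Y :: "'a::ab_group_add set"
  assumes L: "sgrp L" and K: "sgrp K" and LK: "L \<subseteq> K"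
  and Y: "\<And>y k. y\<in>Y \<Longrightarrow> k\<in>K \<Longrightarrow> y + k \<in> Y"
  and fin: "finite (cls L ` Y)"
  shows "card (cls L ` Y) = card (cls L ` K) * card (cls K ` Y)"
proof -
  define P where "P C = cls L ` C" for C
  have U: "cls L ` Y = \<Union>(P ` (cls K ` Y))"
  proof
    show "cls L ` Y \<subseteq> \<Union>(P ` (cls K ` Y))"
      using cls_self[OF K] unfolding P_def by blast
    show "\<Union>(P ` (cls K ` Y)) \<subseteq> cls L ` Y"
    proof
      fix D assume "D \<in> \<Union>(P ` (cls K ` Y))"
      then obtain y z where "y \<in> Y" "z \<in> cls K y" "D = cls L z" unfolding P_def by auto
      then obtain k where "k \<in> K" "z = y + k" "D = cls L z" unfolding cls_def by auto
      then show "D \<in> cls L ` Y" using Y \<open>y \<in> Y\<close> by auto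
    qed
  qed
  have h: "(\<Union> (cls K ` D)) = cls K y" if "D = cls L y" "y \<in> Y" for D y
  proof -
    have "cls K d = cls K y" if "d \<in> cls L y" for d
    proof -
      obtain l where "l \<in> L" "d = y + l" using \<open>d \<in> cls L y\<close> unfolding cls_def by auto
      then show ?thesis using cls_eq[OF K] LK by auto
    qed
    note c = this
    have s: "y \<in> cls L y" using cls_self[OF L] .
    show ?thesis
    proof (rule equalityI)
      show "\<Union> (cls K ` D) \<subseteq> cls K y"
      proof
        fix x assume "x \<in> \<Union> (cls K ` D)"
        then obtain d where "d \<in> D" "x \<in> cls K d" by blast
        then show "x \<in> cls K y" using c that(1) by metis
      qed
      show "cls K y \<subseteq> \<Union> (cls K ` D)" using s that(1) by blast
    qed
  qed
  have "cls K ` Y = (\<lambda>D. \<Union> (cls K ` D)) ` (cls L ` Y)"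
  proof
    show "cls K ` Y \<subseteq> (\<lambda>D. \<Union> (cls K ` D)) ` (cls L ` Y)"
    proof
      fix C assume "C \<in> cls K ` Y"
      then obtain y where "y \<in> Y" "C = cls K y" by auto
      then show "C \<in> (\<lambda>D. \<Union> (cls K ` D)) ` (cls L ` Y)"
        using h[of "cls L y" y] by (intro image_eqI[of _ _ "cls L y"]) auto
    qed
    show "(\<lambda>D. \<Union> (cls K ` D)) ` (cls L ` Y) \<subseteq> cls K ` Y"
      using h by auto
  qed
  then have finI: "finite (cls K ` Y)" using fin by simp
  have cardP: "card (P C) = card (cls L ` K)" if CC: "C \<in> cls K ` Y" for C
  proof -
    obtain y where y: "y \<in> Y" "C = cls K y" using CC by auto
    have e: "cls L (y + k) = (\<lambda>z. y + z) ` cls L k" for k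
      unfolding cls_def image_image by (simp add: add.assoc)
    have "P C = (\<lambda>D. (\<lambda>z. y + z) ` D) ` (cls L ` K)"
      unfolding P_def y(2) cls_def[of K] image_image by (simp add: e image_image)
    moreover have "inj_on (\<lambda>D. (\<lambda>z. y + z) ` D) (cls L ` K)"
    proof (rule inj_onI)
      fix A B assume "(\<lambda>z. y + z) ` A = (\<lambda>z. y + z) ` B"
      then have "(\<lambda>z. -y + z) ` ((\<lambda>z. y + z) ` A) = (\<lambda>z. -y + z) ` ((\<lambda>z. y + z) ` B)" by simp
      then show "A = B" by (simp add: image_image)
    qed
    ultimately show ?thesis by (simp add: card_image)
  qed
  have disj: "P C \<inter> P C' = {}" if CC: "C \<in> cls K ` Y" "C' \<in> cls K ` Y" "C \<noteq> C'" for C C'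
  proof (rule ccontr)
    assume "P C \<inter> P C' \<noteq> {}"
    obtain y y' where y: "y \<in> Y" "C = cls K y" "y' \<in> Y" "C' = cls K y'" using CC by auto
    obtain k k' where kk: "k \<in> K" "k' \<in> K" "cls L (y + k) = cls L (y' + k')"
      using \<open>P C \<inter> P C' \<noteq> {}\<close> unfolding P_def y cls_def[of K] by auto
    then have "(y + k) - (y' + k') \<in> K" using cls_eq[OF L] LK by auto
    then have "((y + k) - (y' + k')) - k + k' \<in> K" by (rule sgrp_add[OF K sgrp_diff[OF K _ kk(1)] kk(2)])
    then have "y - y' \<in> K" by (simp add: algebra_simps)
    then show False using CC(3) y cls_eq[OF K] by auto
  qed
  have finP: "\<forall>C\<in>cls K ` Y. finite (P C)"
    using fin U by (metis Union_upper finite_subset image_eqI)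
  have "card (cls L ` Y) = (\<Sum>C\<in>cls K ` Y. card (P C))"
    unfolding U by (rule card_UN_disjoint[OF finI finP]) (use disj in blast)
  also have "\<dots> = card (cls L ` K) * card (cls K ` Y)"
    using cardP by simp
  finally show ?thesis .
qed



definition Zc :: "(real \<times> real \<times> real) set" where
  "Zc = {u. fst u \<in> \<int> \<and> fst (snd u) \<in> \<int> \<and> snd (snd u) \<in> \<int>}"

definition floorv :: "real \<times> real \<times> real \<Rightarrow> real \<times> real \<times> real" where
  "floorv u = (of_int \<lfloor>fst u\<rfloor>, of_int \<lfloor>fst (snd u)\<rfloor>, of_int \<lfloor>snd (snd u)\<rfloor>)"

locale arr3 =
  fixes a1 b1 a2 b2 a3 b3 :: int and c1 c2 c3 :: real
  assumes d12: "a1 * b2 - a2 * b1 \<noteq> 0"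
begin

definition "L1 p = of_int a1 * fst p + of_int b1 * snd p - c1"
definition "L2 p = of_int a2 * fst p + of_int b2 * snd p - c2"
definition "L3 p = of_int a3 * fst p + of_int b3 * snd p - c3"
definition "Lv p = (L1 p, L2 p, L3 p)"
definition "Nl (v::real\<times>real) = (of_int a1 * fst v + of_int b1 * snd v,
   of_int a2 * fst v + of_int b2 * snd v, of_int a3 * fst v + of_int b3 * snd v)"
definition "w1 = a2 * b3 - a3 * b2"
definition "w2 = a3 * b1 - a1 * b3"
definition "w3 = a1 * b2 - a2 * b1"
definition "wd (u::real\<times>real\<times>real) = of_int w1 * fst u + of_int w2 * fst (snd u) + of_int w3 * snd (snd u)"
definition "gam = - (of_int w1 * c1 + of_int w2 * c2 + of_int w3 * c3)"
definition "Lam = {Nl (of_int m, of_int n) | m n. True}"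
definition "KK = {u \<in> Zc. wd u = 0}"

lemma w3_nz: "w3 \<noteq> 0" using d12 by (simp add: w3_def)

lemma Lv_add: "Lv (p + v) = Lv p + Nl v"
  by (simp add: Lv_def Nl_def L1_def L2_def L3_def algebra_simps)

lemma wd_Lv: "wd (Lv p) = gam"
  by (simp add: wd_def Lv_def L1_def L2_def L3_def gam_def w1_def w2_def w3_def algebra_simps)

lemma wd_Nl: "wd (Nl v) = 0"
  by (simp add: wd_def Nl_def w1_def w2_def w3_def algebra_simps)

lemma wd_add: "wd (u + v) = wd u + wd v"
  by (simp add: wd_def algebra_simps)

lemma wd_diff: "wd (u - v) = wd u - wd v"
  by (simp add: wd_def algebra_simps)

lemma solve:
  assumes "wd u = gam"
  shows "\<exists>p. Lv p = u"
proof -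
  obtain u1 u2 u3 where u: "u = (u1, u2, u3)" by (cases u) auto
  define d where "d = real_of_int w3"
  have d: "d \<noteq> 0" using w3_nz by (simp add: d_def)
  define p where "p = ((of_int b2 * (u1 + c1) - of_int b1 * (u2 + c2)) / d,
                       (of_int a1 * (u2 + c2) - of_int a2 * (u1 + c1)) / d)"
  have dp1: "d * fst p = of_int b2 * (u1 + c1) - of_int b1 * (u2 + c2)" using d by (simp add: p_def)
  have dp2: "d * snd p = of_int a1 * (u2 + c2) - of_int a2 * (u1 + c1)" using d by (simp add: p_def)
  have dv: "d = of_int a1 * of_int b2 - of_int a2 * of_int b1" by (simp add: d_def w3_def)
  have "d * L1 p = of_int a1 * (d * fst p) + of_int b1 * (d * snd p) - d * c1"
    by (simp add: L1_def algebra_simps)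
  also have "\<dots> = d * u1" unfolding dp1 dp2 unfolding dv by (simp add: algebra_simps)
  finally have e1: "L1 p = u1" using d by simp
  have "d * L2 p = of_int a2 * (d * fst p) + of_int b2 * (d * snd p) - d * c2"
    by (simp add: L2_def algebra_simps)
  also have "\<dots> = d * u2" unfolding dp1 dp2 unfolding dv by (simp add: algebra_simps)
  finally have e2: "L2 p = u2" using d by simp
  have "wd (Lv p) = wd u" using assms wd_Lv by simp
  then have "d * L3 p = d * u3" using e1 e2 unfolding wd_def Lv_def u d_def by simp
  then have "L3 p = u3" using d by simp
  then have "Lv p = u" using e1 e2 u by (simp add: Lv_def)
  then show ?thesis by blast
qed

lemma solve0:
  assumes "wd u = 0"
  shows "\<exists>v. Nl v = u"
proof -
  obtain p where p: "Lv p = u + Lv 0" using solve[of "u + Lv 0"] assms wd_add wd_Lv by auto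
  have "Lv (0 + p) = Lv 0 + Nl p" by (rule Lv_add)
  then have "Nl p = u" using p by (simp add: algebra_simps)
  then show ?thesis by blast
qed

lemma Zc_add: "u \<in> Zc \<Longrightarrow> v \<in> Zc \<Longrightarrow> u + v \<in> Zc"
  by (auto simp: Zc_def)
lemma Zc_diff: "u \<in> Zc \<Longrightarrow> v \<in> Zc \<Longrightarrow> u - v \<in> Zc"
  by (auto simp: Zc_def)

lemma sgrp_KK: "sgrp KK"
  unfolding sgrp_def KK_def
proof (intro conjI ballI)
  show "0 \<in> {u \<in> Zc. wd u = 0}" by (simp add: Zc_def wd_def)
  fix x y assume "x \<in> {u \<in> Zc. wd u = 0}" "y \<in> {u \<in> Zc. wd u = 0}"
  then show "x - y \<in> {u \<in> Zc. wd u = 0}" using Zc_diff wd_diff by auto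
qed

lemma Nl_diff: "Nl u - Nl v = Nl (u - v)"
  by (simp add: Nl_def algebra_simps)

lemma sgrp_Lam: "sgrp Lam"
  unfolding sgrp_def Lam_def
proof (intro conjI ballI)
  show "0 \<in> {Nl (of_int m, of_int n) |m n. True}"
    by (rule CollectI, rule exI[of _ 0], rule exI[of _ 0]) (simp add: Nl_def zero_prod_def)
  fix x y assume "x \<in> {Nl (of_int m, of_int n) |m n. True}" "y \<in> {Nl (of_int m, of_int n) |m n. True}"
  then obtain m n m' n' where "x = Nl (of_int m, of_int n)" "y = Nl (of_int m', of_int n')" by auto
  then have "x - y = Nl (of_int (m - m'), of_int (n - n'))" by (simp add: Nl_diff)
  then show "x - y \<in> {Nl (of_int m, of_int n) |m n. True}" by blast
qed

lemma Lam_KK: "Lam \<subseteq> KK"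
  unfolding Lam_def KK_def using wd_Nl by (auto simp: Zc_def Nl_def)

lemma Nl_inj: "Nl u = Nl v \<Longrightarrow> u = v"
proof -
  assume "Nl u = Nl v"
  then have "Nl (u - v) = 0" using Nl_diff by (metis right_minus_eq)
  then have h1: "of_int a1 * fst (u - v) + of_int b1 * snd (u - v) = 0"
    and h2: "of_int a2 * fst (u - v) + of_int b2 * snd (u - v) = (0::real)"
    by (auto simp: Nl_def prod_eq_iff)
  define x where "x = fst (u - v)"
  define y where "y = snd (u - v)"
  have dd: "real_of_int a1 * of_int b2 - of_int a2 * of_int b1 \<noteq> 0"
    using d12 by (metis of_int_eq_0_iff of_int_diff of_int_mult)
  have "(real_of_int a1 * of_int b2 - of_int a2 * of_int b1) * x = of_int b2 * (of_int a1 * x + of_int b1 * y) - of_int b1 * (of_int a2 * x + of_int b2 * y)"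
    by (simp add: algebra_simps)
  then have A: "(real_of_int a1 * of_int b2 - of_int a2 * of_int b1) * x = 0"
    using h1 h2 unfolding x_def[symmetric] y_def[symmetric] by simp
  have "(real_of_int a1 * of_int b2 - of_int a2 * of_int b1) * y = of_int a1 * (of_int a2 * x + of_int b2 * y) - of_int a2 * (of_int a1 * x + of_int b1 * y)"
    by (simp add: algebra_simps)
  then have B: "(real_of_int a1 * of_int b2 - of_int a2 * of_int b1) * y = 0"
    using h1 h2 unfolding x_def[symmetric] y_def[symmetric] by simp
  from A B have "x = 0" "y = 0" using dd by auto
  then show "u = v" unfolding x_def y_def by (simp add: prod_eq_iff)
qed

end


lemma Ints_add_iff: "n \<in> \<int> \<Longrightarrow> (x + n \<in> \<int>) = (x \<in> (\<int>::real set))"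
  by (metis Ints_add Ints_diff add_diff_cancel_right')

lemma floor_add_Ints: "n \<in> \<int> \<Longrightarrow> (of_int \<lfloor>x + n\<rfloor> :: real) = of_int \<lfloor>x\<rfloor> + n"
  by (metis Ints_cases floor_add_int of_int_add)

lemma Ints_abs_lt1: "(q::real) \<in> \<int> \<Longrightarrow> \<bar>q\<bar> < 1 \<Longrightarrow> q = 0"
proof -
  assume "q \<in> \<int>" "\<bar>q\<bar> < 1"
  then obtain z where "q = of_int z" by (auto elim: Ints_cases)
  then have "\<bar>z\<bar> < 1" using \<open>\<bar>q\<bar> < 1\<close> by linarith
  then show "q = 0" using \<open>q = of_int z\<close> by simp
qed

lemma term_bounds:
  fixes th :: real and w :: int
  assumes "0 < th" "th < 1"
  shows "of_int (min w 0) \<le> of_int w * th" "of_int w * th \<le> of_int (max w 0)"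
    "w \<noteq> 0 \<Longrightarrow> of_int (min w 0) < of_int w * th \<or> of_int w * th < of_int (max w 0)"
    "w \<noteq> 0 \<Longrightarrow> of_int (min w 0) < of_int w * th \<and> of_int w * th < of_int (max w 0)"
proof -
  have c: "(0 < w \<and> 0 < of_int w * th \<and> of_int w * th < of_int w) \<or> (w < 0 \<and> of_int w < of_int w * th \<and> of_int w * th < 0) \<or> w = 0"
  proof (cases "w > 0")
    case True
    then have "0 < of_int w * th" using assms by simp
    moreover have "of_int w * th < of_int w * 1" using True assms by (intro mult_strict_left_mono) auto
    ultimately show ?thesis using True by simp
  next
    case False
    show ?thesis
    proof (cases "w < 0")
      case True
      then have "of_int w * th < 0" using assms by (simp add: mult_neg_pos)
      moreover have "of_int w * 1 < of_int w * th" using True assms by (intro mult_strict_left_mono_neg) auto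
      ultimately show ?thesis using True by simp
    qed (use False in auto)
  qed
  show "of_int (min w 0) \<le> of_int w * th" "of_int w * th \<le> of_int (max w 0)" using c assms by auto
  show "w \<noteq> 0 \<Longrightarrow> of_int (min w 0) < of_int w * th \<or> of_int w * th < of_int (max w 0)" using c assms by auto
  show "w \<noteq> 0 \<Longrightarrow> of_int (min w 0) < of_int w * th \<and> of_int w * th < of_int (max w 0)" using c assms by auto
qed

lemma floorv_Zc: "floorv u \<in> Zc" by (simp add: floorv_def Zc_def)

lemma floorv_add: "k \<in> Zc \<Longrightarrow> floorv (u + k) = floorv u + k"
  by (simp add: floorv_def Zc_def floor_add_Ints prod_eq_iff)

context arr3 begin

definition "cmpl = {p. L1 p \<notin> \<int> \<and> L2 p \<notin> \<int> \<and> L3 p \<notin> \<int>}"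
definition "Sset = floorv ` Lv ` cmpl"
definition "X3 = Lv ` {p. L1 p \<in> \<int> \<and> L2 p \<in> \<int>}"
definition "X2 = Lv ` {p. L1 p \<in> \<int> \<and> L3 p \<in> \<int>}"
definition "X1 = Lv ` {p. L2 p \<in> \<int> \<and> L3 p \<in> \<int>}"
definition "Xset = X1 \<union> X2 \<union> X3"
definition "g = gcd w1 (gcd w2 w3)"
definition "pos = max w1 0 + max w2 0 + max w3 0"
definition "neg = min w1 0 + min w2 0 + min w3 0"
definition "MM = (\<bar>w1\<bar> + \<bar>w2\<bar> + \<bar>w3\<bar>) div g"
definition "alpha = (gam - of_int pos) / of_int g"

lemma g_pos: "g > 0" using w3_nz by (simp add: g_def)
lemma g_dvd: "g dvd w1" "g dvd w2" "g dvd w3" by (simp_all add: g_def) (meson dvd_trans gcd_dvd1 gcd_dvd2)+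

lemma Lv_comp: "Lv (p + v) = Lv p + Nl v" by (rule Lv_add)

lemma KK_Nl: "k \<in> KK \<Longrightarrow> \<exists>v. Nl v = k"
  using solve0 unfolding KK_def by auto

lemma KK_Zc: "k \<in> KK \<Longrightarrow> k \<in> Zc" unfolding KK_def by auto

lemma Lcomp:
  assumes "Nl v = k"
  shows "L1 (p + v) = L1 p + fst k" "L2 (p + v) = L2 p + fst (snd k)" "L3 (p + v) = L3 p + snd (snd k)"
  using Lv_add[of p v] assms by (simp_all add: Lv_def prod_eq_iff)

lemma Sset_inv: assumes "y \<in> Sset" "k \<in> KK" shows "y + k \<in> Sset"
proof -
  obtain p where p: "p \<in> cmpl" "y = floorv (Lv p)" using assms(1) unfolding Sset_def by auto
  obtain v where v: "Nl v = k" using KK_Nl assms(2) by blast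
  have kz: "k \<in> Zc" using KK_Zc assms(2) .
  have "p + v \<in> cmpl" using p(1) Lcomp[OF v, of p] kz unfolding cmpl_def Zc_def
    by (simp add: Ints_add_iff)
  moreover have "floorv (Lv (p + v)) = y + k"
    using Lv_add[of p v] v p(2) floorv_add[OF kz] by simp
  ultimately show ?thesis unfolding Sset_def by (metis image_eqI)
qed

lemma Xi_inv:
  assumes "k \<in> KK"
  shows "y \<in> X1 \<Longrightarrow> y + k \<in> X1" "y \<in> X2 \<Longrightarrow> y + k \<in> X2" "y \<in> X3 \<Longrightarrow> y + k \<in> X3"
proof -
  obtain v where v: "Nl v = k" using KK_Nl assms by blast
  have kz: "k \<in> Zc" using KK_Zc assms .
  have e: "Lv (p + v) = Lv p + k" for p using Lv_add[of p v] v by simp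
  show "y \<in> X1 \<Longrightarrow> y + k \<in> X1"
  proof -
    assume "y \<in> X1"
    then obtain p where "L2 p \<in> \<int>" "L3 p \<in> \<int>" "y = Lv p" unfolding X1_def by auto
    then show ?thesis using Lcomp[OF v, of p] kz e[of p] unfolding X1_def Zc_def
      by (intro image_eqI[of _ _ "p + v"]) auto
  qed
  show "y \<in> X2 \<Longrightarrow> y + k \<in> X2"
  proof -
    assume "y \<in> X2"
    then obtain p where "L1 p \<in> \<int>" "L3 p \<in> \<int>" "y = Lv p" unfolding X2_def by auto
    then show ?thesis using Lcomp[OF v, of p] kz e[of p] unfolding X2_def Zc_def
      by (intro image_eqI[of _ _ "p + v"]) auto
  qed
  show "y \<in> X3 \<Longrightarrow> y + k \<in> X3"
  proof -
    assume "y \<in> X3"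
    then obtain p where "L1 p \<in> \<int>" "L2 p \<in> \<int>" "y = Lv p" unfolding X3_def by auto
    then show ?thesis using Lcomp[OF v, of p] kz e[of p] unfolding X3_def Zc_def
      by (intro image_eqI[of _ _ "p + v"]) auto
  qed
qed

lemma Xset_inv: "y \<in> Xset \<Longrightarrow> k \<in> KK \<Longrightarrow> y + k \<in> Xset"
  unfolding Xset_def using Xi_inv by blast

end


lemma card_three_bound:
  assumes "finite A" "finite B" "finite C" "finite Z"
    "A \<inter> B \<subseteq> Z" "A \<inter> C \<subseteq> Z" "B \<inter> C \<subseteq> Z"
  shows "card A + card B + card C \<le> card (A \<union> B \<union> C) + 2 * card Z"
proof -
  have d1: "A \<inter> (B - Z) = {}" using assms by blast
  have d2: "(A \<union> (B - Z)) \<inter> (C - Z) = {}" using assms by blast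
  have "card (A \<union> (B - Z) \<union> (C - Z)) = card A + card (B - Z) + card (C - Z)"
    using d1 d2 assms by (simp add: card_Un_disjoint)
  moreover have "card (A \<union> (B - Z) \<union> (C - Z)) \<le> card (A \<union> B \<union> C)"
    using assms by (intro card_mono) auto
  moreover have "card B \<le> card (B - Z) + card Z"
    by (metis assms(4) card_Un_le le_trans Un_Diff_cancel2 assms(2) card_mono finite_Un sup_ge1 sup_commute)
  moreover have "card C \<le> card (C - Z) + card Z"
    by (metis assms(4) card_Un_le le_trans Un_Diff_cancel2 assms(3) card_mono finite_Un sup_ge1 sup_commute)
  ultimately show ?thesis by linarith
qed

context arr3 begin

lemma frac_pos: "x \<notin> \<int> \<Longrightarrow> 0 < frac (x::real)"
  by (metis frac_eq_0_iff frac_ge_0 order_le_less)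

lemma S_vals:
  assumes "s \<in> Sset"
  shows "\<exists>n::int. wd s = of_int g * of_int n \<and> alpha < of_int n \<and> of_int n < alpha + of_int MM"
proof -
  obtain p where p: "p \<in> cmpl" "s = floorv (Lv p)" using assms unfolding Sset_def by auto
  define u1 where "u1 = L1 p"
  define u2 where "u2 = L2 p"
  define u3 where "u3 = L3 p"
  have nz: "u1 \<notin> \<int>" "u2 \<notin> \<int>" "u3 \<notin> \<int>" using p(1) unfolding cmpl_def u1_def u2_def u3_def by auto
  define z where "z = w1 * \<lfloor>u1\<rfloor> + w2 * \<lfloor>u2\<rfloor> + w3 * \<lfloor>u3\<rfloor>"
  have ws: "wd s = of_int z"
    unfolding p(2) z_def wd_def floorv_def Lv_def u1_def u2_def u3_def by simp
  have "g dvd z" unfolding z_def using g_dvd by simp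
  then obtain n where n: "z = g * n" by (auto elim: dvdE)
  define Th where "Th = of_int w1 * frac u1 + of_int w2 * frac u2 + of_int w3 * frac u3"
  have "wd (Lv p) = gam" by (rule wd_Lv)
  then have gz: "gam = of_int z + Th"
    unfolding z_def Th_def wd_def Lv_def u1_def[symmetric] u2_def[symmetric] u3_def[symmetric] frac_def
    by (simp add: algebra_simps)
  have b1: "of_int (min w1 0) \<le> of_int w1 * frac u1" "of_int w1 * frac u1 \<le> of_int (max w1 0)"
    using term_bounds[OF frac_pos[OF nz(1)] frac_lt_1] by auto
  have b2: "of_int (min w2 0) \<le> of_int w2 * frac u2" "of_int w2 * frac u2 \<le> of_int (max w2 0)"
    using term_bounds[OF frac_pos[OF nz(2)] frac_lt_1] by auto
  have b3: "of_int (min w3 0) < of_int w3 * frac u3" "of_int w3 * frac u3 < of_int (max w3 0)"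
    using term_bounds(4)[OF frac_pos[OF nz(3)] frac_lt_1 w3_nz] by auto
  have thb: "of_int neg < Th" "Th < of_int pos"
    using b1 b2 b3 unfolding Th_def neg_def pos_def by simp_all
  have gp: "real_of_int g > 0" using g_pos by simp
  have W: "of_int pos - of_int neg = of_int g * (of_int MM :: real)"
  proof -
    have "g dvd \<bar>w1\<bar> + \<bar>w2\<bar> + \<bar>w3\<bar>" using g_dvd by simp
    then have "\<bar>w1\<bar> + \<bar>w2\<bar> + \<bar>w3\<bar> = g * MM" unfolding MM_def by simp
    moreover have "pos - neg = \<bar>w1\<bar> + \<bar>w2\<bar> + \<bar>w3\<bar>" unfolding pos_def neg_def by auto
    ultimately have "pos - neg = g * MM" by simp
    then show ?thesis by (metis of_int_diff of_int_mult)
  qed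
  have ga: "of_int g * alpha = gam - of_int pos" using gp unfolding alpha_def by simp
  have gzn: "of_int g * of_int n = gam - Th" using gz n by simp
  have "of_int g * alpha < of_int g * of_int n"
    using ga gzn thb by simp
  then have l: "alpha < of_int n" using gp by simp
  have "of_int g * (alpha + of_int MM) = gam - of_int neg"
    using ga W by (simp add: algebra_simps)
  then have "of_int g * of_int n < of_int g * (alpha + of_int MM)"
    using gzn thb by simp
  then have r: "of_int n < alpha + of_int MM" using gp by simp
  show ?thesis using ws n l r by (intro exI[of _ n]) simp
qed

lemma int_interval_card:
  fixes a :: real and m :: int
  assumes m1: "m \<ge> 1"
  shows "finite {n::int. a < of_int n \<and> of_int n < a + of_int m}"
    "card {n::int. a < of_int n \<and> of_int n < a + of_int m} + (if a \<in> \<int> then 1 else 0) \<le> nat m"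
proof -
  let ?N = "{n::int. a < of_int n \<and> of_int n < a + of_int m}"
  have sub: "?N \<subseteq> {\<lfloor>a\<rfloor> + 1 .. \<lfloor>a\<rfloor> + m}"
  proof
    fix n assume "n \<in> ?N"
    then have "a < of_int n" "of_int n < a + of_int m" by auto
    then have "\<lfloor>a\<rfloor> < n" "n < \<lfloor>a\<rfloor> + 1 + m" by linarith+
    then show "n \<in> {\<lfloor>a\<rfloor> + 1 .. \<lfloor>a\<rfloor> + m}" by auto
  qed
  show "finite ?N" using sub finite_subset by blast
  show "card ?N + (if a \<in> \<int> then 1 else 0) \<le> nat m"
  proof (cases "a \<in> \<int>")
    case True
    then have ae: "a = of_int \<lfloor>a\<rfloor>" by (metis Ints_cases floor_of_int)
    have "?N \<subseteq> {\<lfloor>a\<rfloor> + 1 .. \<lfloor>a\<rfloor> + m - 1}"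
    proof
      fix n assume "n \<in> ?N"
      then have "a < of_int n" "of_int n < a + of_int m" by auto
      then have "\<lfloor>a\<rfloor> < n" "n < \<lfloor>a\<rfloor> + m" using ae by (metis of_int_less_iff, metis of_int_add of_int_less_iff)
      then show "n \<in> {\<lfloor>a\<rfloor> + 1 .. \<lfloor>a\<rfloor> + m - 1}" by auto
    qed
    then have "card ?N \<le> card {\<lfloor>a\<rfloor> + 1 .. \<lfloor>a\<rfloor> + m - 1}" by (intro card_mono) auto
    then show ?thesis using True m1 by simp
  next
    case False
    have "card ?N \<le> card {\<lfloor>a\<rfloor> + 1 .. \<lfloor>a\<rfloor> + m}" using sub by (intro card_mono) auto
    then show ?thesis using False by simp
  qed
qed

lemma S_bound: "card (cls KK ` Sset) + (if alpha \<in> \<int> then 1 else 0) \<le> nat MM"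
proof -
  define psi where "psi s = wd s / of_int g" for s
  define N where "N = {n::int. alpha < of_int n \<and> of_int n < alpha + of_int MM}"
  have gp: "real_of_int g > 0" using g_pos by simp
  have sub: "psi ` Sset \<subseteq> of_int ` N"
  proof
    fix v assume "v \<in> psi ` Sset"
    then obtain s where s: "s \<in> Sset" "v = psi s" by auto
    obtain n where "wd s = of_int g * of_int n" "alpha < of_int n" "of_int n < alpha + of_int MM"
      using S_vals[OF s(1)] by blast
    then show "v \<in> of_int ` N" using s gp unfolding psi_def N_def by auto
  qed
  have M1: "MM \<ge> 1"
  proof -
    have "g dvd \<bar>w1\<bar> + \<bar>w2\<bar> + \<bar>w3\<bar>" using g_dvd by simp
    then have e: "\<bar>w1\<bar> + \<bar>w2\<bar> + \<bar>w3\<bar> = g * MM" unfolding MM_def by simp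
    have "\<bar>w1\<bar> + \<bar>w2\<bar> + \<bar>w3\<bar> > 0" using w3_nz by simp
    then have "g * MM > 0" using e by simp
    then show ?thesis using g_pos by (simp add: zero_less_mult_iff)
  qed
  have finN: "finite N" unfolding N_def by (rule int_interval_card(1)[OF M1])
  have fin: "finite (psi ` Sset)" using sub finN finite_subset by blast
  have "card (psi ` Sset) \<le> card (of_int ` N :: real set)" using sub finN by (intro card_mono) auto
  also have "\<dots> \<le> card N" by (rule card_image_le[OF finN])
  finally have c1: "card (psi ` Sset) \<le> card N" .
  define pick where "pick v = cls KK (SOME s. s \<in> Sset \<and> psi s = v)" for v
  have "cls KK ` Sset \<subseteq> pick ` (psi ` Sset)"
  proof
    fix C assume "C \<in> cls KK ` Sset"
    then obtain s where s: "s \<in> Sset" "C = cls KK s" by auto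
    define s' where "s' = (SOME s'. s' \<in> Sset \<and> psi s' = psi s)"
    have s': "s' \<in> Sset" "psi s' = psi s" unfolding s'_def by (rule someI2[of _ s]; use s in auto)+
    have "s - s' \<in> Zc"
      using s(1) s'(1) unfolding Sset_def by (auto intro: Zc_diff floorv_Zc)
    moreover have "wd (s - s') = 0" using s'(2) gp unfolding psi_def by (simp add: wd_diff)
    ultimately have "s - s' \<in> KK" unfolding KK_def by simp
    then have "C = pick (psi s)" unfolding pick_def s'_def[symmetric] s(2) using cls_eq[OF sgrp_KK] by simp
    then show "C \<in> pick ` (psi ` Sset)" using s by auto
  qed
  then have "card (cls KK ` Sset) \<le> card (pick ` (psi ` Sset))" using fin by (intro card_mono) auto
  also have "\<dots> \<le> card (psi ` Sset)" using fin by (rule card_image_le)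
  finally have "card (cls KK ` Sset) \<le> card N" using c1 by simp
  then show ?thesis using int_interval_card(2)[OF M1, of alpha] unfolding N_def by simp
qed

end


context arr3 begin

lemma wit_gen:
  fixes pr :: "real \<times> real \<times> real \<Rightarrow> real" and F :: "int \<Rightarrow> real \<times> real \<times> real"
    and Y :: "(real \<times> real \<times> real) set" and w e :: int
  assumes FY: "\<And>t. F t \<in> Y"
    and prF: "\<And>t. pr (F t) = (gam - of_int g * of_int t) / of_int w + of_int (t * e)"
    and prZ: "\<And>u v. u - v \<in> Zc \<Longrightarrow> pr u - pr v \<in> \<int>"
    and fin: "finite (cls KK ` Y)" and gw: "g dvd w"
  shows "nat (\<bar>w\<bar> div g) \<le> card (cls KK ` Y)"
proof (cases "w = 0")
  case True then show ?thesis by simp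
next
  case False
  define n where "n = \<bar>w\<bar> div g"
  have wn: "\<bar>w\<bar> = g * n" unfolding n_def using gw by simp
  have gp: "g > 0" using g_pos .
  have inj: "inj_on (\<lambda>t. cls KK (F t)) {0..<n}"
  proof (rule inj_onI)
    fix t t' assume t: "t \<in> {0..<n}" "t' \<in> {0..<n}" and eq: "cls KK (F t) = cls KK (F t')"
    then have "F t - F t' \<in> KK" using cls_eq[OF sgrp_KK] by simp
    then have "pr (F t) - pr (F t') \<in> \<int>" using prZ KK_Zc by blast
    moreover have "pr (F t) - pr (F t') = of_int (g * (t' - t)) / of_int w + of_int ((t - t') * e)"
    proof -
      have "(gam - of_int g * of_int t) / of_int w - (gam - of_int g * of_int t') / of_int w
            = ((gam - of_int g * of_int t) - (gam - of_int g * of_int t')) / (of_int w :: real)"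
        by (rule diff_divide_distrib[symmetric])
      also have "(gam - of_int g * of_int t) - (gam - of_int g * of_int t') = (of_int (g * (t' - t)) :: real)"
        by (simp add: algebra_simps)
      finally show ?thesis unfolding prF by (simp add: algebra_simps)
    qed
    ultimately have qi: "of_int (g * (t' - t)) / (of_int w :: real) \<in> \<int>"
      using Ints_add_iff[of "of_int ((t - t') * e)"] by (metis Ints_of_int)
    have "\<bar>t' - t\<bar> < n" using t by auto
    then have "g * \<bar>t' - t\<bar> < g * n" using gp by simp
    then have "\<bar>g * (t' - t)\<bar> < \<bar>w\<bar>" using wn gp by (simp add: abs_mult)
    then have "\<bar>real_of_int (g * (t' - t))\<bar> < \<bar>real_of_int w\<bar>" by linarith
    then have "\<bar>of_int (g * (t' - t))\<bar> / \<bar>of_int w :: real\<bar> < 1" using False by (subst divide_less_eq_1_pos) auto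
    then have "\<bar>of_int (g * (t' - t)) / (of_int w :: real)\<bar> < 1" by (simp add: abs_divide)
    then have "of_int (g * (t' - t)) / (of_int w :: real) = 0" using Ints_abs_lt1 qi by blast
    then have "g * (t' - t) = 0" using False by simp
    then show "t = t'" using gp by simp
  qed
  have "(\<lambda>t. cls KK (F t)) ` {0..<n} \<subseteq> cls KK ` Y" using FY by auto
  then have "card ((\<lambda>t. cls KK (F t)) ` {0..<n}) \<le> card (cls KK ` Y)" using fin by (rule card_mono[rotated])
  then show ?thesis using card_image[OF inj] unfolding n_def by simp
qed

lemma bezout3: "\<exists>e1 e2 e3. w1 * e1 + w2 * e2 + w3 * e3 = g"
proof -
  obtain u v where uv: "u * w2 + v * w3 = gcd w2 w3" using bezout_int by blast
  obtain x y where xy: "x * w1 + y * gcd w2 w3 = gcd w1 (gcd w2 w3)" using bezout_int by blast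
  have "w1 * x + w2 * (y * u) + w3 * (y * v) = g"
    using xy uv unfolding g_def by (metis (no_types, lifting) add.assoc distrib_left mult.commute mult.left_commute)
  then show ?thesis by blast
qed

lemma inX:
  assumes "wd u = gam"
  shows "fst u \<in> \<int> \<Longrightarrow> fst (snd u) \<in> \<int> \<Longrightarrow> u \<in> X3"
    "fst u \<in> \<int> \<Longrightarrow> snd (snd u) \<in> \<int> \<Longrightarrow> u \<in> X2"
    "fst (snd u) \<in> \<int> \<Longrightarrow> snd (snd u) \<in> \<int> \<Longrightarrow> u \<in> X1"
proof -
  obtain p where p: "Lv p = u" using solve[OF assms] by blast
  have e: "L1 p = fst u" "L2 p = fst (snd u)" "L3 p = snd (snd u)" using p by (auto simp: Lv_def)
  show "fst u \<in> \<int> \<Longrightarrow> fst (snd u) \<in> \<int> \<Longrightarrow> u \<in> X3" unfolding X3_def using e p by auto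
  show "fst u \<in> \<int> \<Longrightarrow> snd (snd u) \<in> \<int> \<Longrightarrow> u \<in> X2" unfolding X2_def using e p by auto
  show "fst (snd u) \<in> \<int> \<Longrightarrow> snd (snd u) \<in> \<int> \<Longrightarrow> u \<in> X1" unfolding X1_def using e p by auto
qed

lemma X_sub_wd: "u \<in> Xset \<Longrightarrow> wd u = gam"
  unfolding Xset_def X1_def X2_def X3_def using wd_Lv by auto

lemma X_bound:
  assumes fin: "finite (cls KK ` Xset)"
  shows "nat MM \<le> card (cls KK ` Xset) + (if alpha \<in> \<int> then 2 else 0)"
proof -
  obtain e1 e2 e3 where bz: "w1 * e1 + w2 * e2 + w3 * e3 = g" using bezout3 by blast
  have bzr: "real_of_int w1 * of_int e1 + of_int w2 * of_int e2 + of_int w3 * of_int e3 = of_int g"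
    using bz by (metis of_int_add of_int_mult)
  have fin1: "finite (cls KK ` X1)" "finite (cls KK ` X2)" "finite (cls KK ` X3)"
    using fin unfolding Xset_def by (auto simp: image_Un)
  define F3 :: "int \<Rightarrow> real \<times> real \<times> real" where "F3 t = (of_int (t * e1), of_int (t * e2), (gam - of_int g * of_int t) / of_int w3 + of_int (t * e3))" for t :: int
  have c3: "nat (\<bar>w3\<bar> div g) \<le> card (cls KK ` X3)"
  proof (rule wit_gen[where F = F3 and pr = "\<lambda>u. snd (snd u)" and e = e3])
    fix t
    have "wd (F3 t) = of_int t * (of_int w1 * of_int e1 + of_int w2 * of_int e2 + of_int w3 * of_int e3) + gam - of_int g * of_int t"
      proof -
        have nz: "real_of_int w3 \<noteq> 0" using w3_nz by simp
        have c: "of_int w3 * ((gam - of_int g * of_int t) / of_int w3) = gam - of_int g * of_int t"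
          using nz by simp
        show ?thesis unfolding F3_def wd_def using c by (simp add: algebra_simps)
      qed
    then have "wd (F3 t) = gam" using bzr by simp
    then show "F3 t \<in> X3" by (rule inX(1)) (simp_all add: F3_def)
  qed (auto simp: F3_def Zc_def fin1 g_dvd)
  define F2 :: "int \<Rightarrow> real \<times> real \<times> real" where "F2 t = (of_int (t * e1), (gam - of_int g * of_int t) / of_int w2 + of_int (t * e2), of_int (t * e3))" for t :: int
  have c2: "nat (\<bar>w2\<bar> div g) \<le> card (cls KK ` X2)"
  proof (cases "w2 = 0")
    case True then show ?thesis by simp
  next
    case False
    show ?thesis
    proof (rule wit_gen[where F = F2 and pr = "\<lambda>u. fst (snd u)" and e = e2])
      fix t
      have "wd (F2 t) = of_int t * (of_int w1 * of_int e1 + of_int w2 * of_int e2 + of_int w3 * of_int e3) + gam - of_int g * of_int t"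
      proof -
        have nz: "real_of_int w2 \<noteq> 0" using False by simp
        have c: "of_int w2 * ((gam - of_int g * of_int t) / of_int w2) = gam - of_int g * of_int t"
          using nz by simp
        show ?thesis unfolding F2_def wd_def using c by (simp add: algebra_simps)
      qed
      then have "wd (F2 t) = gam" using bzr by simp
      then show "F2 t \<in> X2" by (rule inX(2)) (simp_all add: F2_def)
    qed (auto simp: F2_def Zc_def fin1 g_dvd)
  qed
  define F1 :: "int \<Rightarrow> real \<times> real \<times> real" where "F1 t = ((gam - of_int g * of_int t) / of_int w1 + of_int (t * e1), of_int (t * e2), of_int (t * e3))" for t :: int
  have c1: "nat (\<bar>w1\<bar> div g) \<le> card (cls KK ` X1)"
  proof (cases "w1 = 0")
    case True then show ?thesis by simp
  next
    case False
    show ?thesis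
    proof (rule wit_gen[where F = F1 and pr = "\<lambda>u. fst u" and e = e1])
      fix t
      have "wd (F1 t) = of_int t * (of_int w1 * of_int e1 + of_int w2 * of_int e2 + of_int w3 * of_int e3) + gam - of_int g * of_int t"
      proof -
        have nz: "real_of_int w1 \<noteq> 0" using False by simp
        have c: "of_int w1 * ((gam - of_int g * of_int t) / of_int w1) = gam - of_int g * of_int t"
          using nz by simp
        show ?thesis unfolding F1_def wd_def using c by (simp add: algebra_simps)
      qed
      then have "wd (F1 t) = gam" using bzr by simp
      then show "F1 t \<in> X1" by (rule inX(3)) (simp_all add: F1_def)
    qed (auto simp: F1_def Zc_def fin1 g_dvd)
  qed
  define Z where "Z = cls KK ` (Xset \<inter> Zc)"
  have Zsub: "Z \<subseteq> cls KK ` Xset" unfolding Z_def by auto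
  then have finZ: "finite Z" using fin finite_subset by blast
  have Zcard: "card Z \<le> (if alpha \<in> \<int> then 1 else 0)"
  proof (cases "Z = {}")
    case True then show ?thesis by simp
  next
    case False
    then obtain t0 where t0: "t0 \<in> Xset" "t0 \<in> Zc" unfolding Z_def by auto
    have "Z \<subseteq> {cls KK t0}"
    proof
      fix C assume "C \<in> Z"
      then obtain t where t: "t \<in> Xset" "t \<in> Zc" "C = cls KK t" unfolding Z_def by auto
      have "t - t0 \<in> KK" unfolding KK_def using Zc_diff[OF t(2) t0(2)] X_sub_wd t(1) t0(1) by (simp add: wd_diff)
      then show "C \<in> {cls KK t0}" using t(3) cls_eq[OF sgrp_KK] by simp
    qed
    then have "card Z \<le> 1" using card_mono[OF _ \<open>Z \<subseteq> {cls KK t0}\<close>] by simp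
    moreover have "alpha \<in> \<int>"
    proof -
      obtain z1 z2 z3 where z: "fst t0 = of_int z1" "fst (snd t0) = of_int z2" "snd (snd t0) = of_int z3"
        using t0(2) unfolding Zc_def by (auto elim!: Ints_cases)
      have "gam = of_int (w1 * z1 + w2 * z2 + w3 * z3)" using X_sub_wd[OF t0(1)] z unfolding wd_def by simp
      moreover have "g dvd w1 * z1 + w2 * z2 + w3 * z3" using g_dvd by simp
      then obtain m where "w1 * z1 + w2 * z2 + w3 * z3 = g * m" by (auto elim: dvdE)
      ultimately have m: "gam = of_int (g * m)" by simp
      have "g dvd max w1 0" "g dvd max w2 0" "g dvd max w3 0" using g_dvd by (auto simp: max_def)
      then have "g dvd pos" unfolding pos_def by simp
      then obtain m' where m': "pos = g * m'" by (auto elim: dvdE)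
      have "gam - of_int pos = of_int g * of_int (m - m')" unfolding m m' by (simp add: algebra_simps)
      then have "alpha = of_int (m - m')" unfolding alpha_def using g_pos by simp
      then show ?thesis by simp
    qed
    ultimately show ?thesis by simp
  qed
  have pw: "cls KK ` X1 \<inter> cls KK ` X2 \<subseteq> Z" "cls KK ` X1 \<inter> cls KK ` X3 \<subseteq> Z" "cls KK ` X2 \<inter> cls KK ` X3 \<subseteq> Z"
  proof -
    have key: "C \<in> Z" if "C = cls KK x" "C = cls KK y" "x \<in> Xset"
      "fst x \<in> \<int> \<or> fst y \<in> \<int>" "fst (snd x) \<in> \<int> \<or> fst (snd y) \<in> \<int>"
      "snd (snd x) \<in> \<int> \<or> snd (snd y) \<in> \<int>"
      for C x y
    proof -
      have "cls KK x = cls KK y" using that(1,2) by simp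
      then have "x - y \<in> KK" using cls_eq[OF sgrp_KK] by blast
      then have d: "x - y \<in> Zc" by (rule KK_Zc)
      have i1: "fst x \<in> \<int> \<longleftrightarrow> fst y \<in> \<int>" using d Ints_add_iff[of "fst (x - y)" "fst y"] unfolding Zc_def by simp
      have i2: "fst (snd x) \<in> \<int> \<longleftrightarrow> fst (snd y) \<in> \<int>" using d Ints_add_iff[of "fst (snd (x - y))" "fst (snd y)"] unfolding Zc_def by simp
      have i3: "snd (snd x) \<in> \<int> \<longleftrightarrow> snd (snd y) \<in> \<int>" using d Ints_add_iff[of "snd (snd (x - y))" "snd (snd y)"] unfolding Zc_def by simp
      have "fst x \<in> \<int> \<and> fst (snd x) \<in> \<int> \<and> snd (snd x) \<in> \<int>" using that(4-6) i1 i2 i3 by argo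
      then have "x \<in> Zc" unfolding Zc_def by simp
      then show ?thesis unfolding Z_def using that(1,3) by auto
    qed
    have m1: "x \<in> X1 \<Longrightarrow> fst (snd x) \<in> \<int> \<and> snd (snd x) \<in> \<int>" for x unfolding X1_def by (auto simp: Lv_def)
    have m2: "x \<in> X2 \<Longrightarrow> fst x \<in> \<int> \<and> snd (snd x) \<in> \<int>" for x unfolding X2_def by (auto simp: Lv_def)
    have m3: "x \<in> X3 \<Longrightarrow> fst x \<in> \<int> \<and> fst (snd x) \<in> \<int>" for x unfolding X3_def by (auto simp: Lv_def)
    have xs: "X1 \<subseteq> Xset" "X2 \<subseteq> Xset" "X3 \<subseteq> Xset" unfolding Xset_def by auto
    show "cls KK ` X1 \<inter> cls KK ` X2 \<subseteq> Z"
    proof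
      fix C assume "C \<in> cls KK ` X1 \<inter> cls KK ` X2"
      then obtain x y where "x \<in> X1" "y \<in> X2" "C = cls KK x" "C = cls KK y" by auto
      then show "C \<in> Z" using key[of C x y] m1 m2 xs by blast
    qed
    show "cls KK ` X1 \<inter> cls KK ` X3 \<subseteq> Z"
    proof
      fix C assume "C \<in> cls KK ` X1 \<inter> cls KK ` X3"
      then obtain x y where "x \<in> X1" "y \<in> X3" "C = cls KK x" "C = cls KK y" by auto
      then show "C \<in> Z" using key[of C x y] m1 m3 xs by blast
    qed
    show "cls KK ` X2 \<inter> cls KK ` X3 \<subseteq> Z"
    proof
      fix C assume "C \<in> cls KK ` X2 \<inter> cls KK ` X3"
      then obtain x y where "x \<in> X2" "y \<in> X3" "C = cls KK x" "C = cls KK y" by auto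
      then show "C \<in> Z" using key[of C x y] m2 m3 xs by blast
    qed
  qed
  have "card (cls KK ` X1) + card (cls KK ` X2) + card (cls KK ` X3) \<le> card (cls KK ` X1 \<union> cls KK ` X2 \<union> cls KK ` X3) + 2 * card Z"
    by (rule card_three_bound[OF fin1 finZ pw])
  also have "cls KK ` X1 \<union> cls KK ` X2 \<union> cls KK ` X3 = cls KK ` Xset" unfolding Xset_def by (simp add: image_Un)
  finally have A: "card (cls KK ` X1) + card (cls KK ` X2) + card (cls KK ` X3) \<le> card (cls KK ` Xset) + 2 * card Z" .
  have "nat MM = nat (\<bar>w1\<bar> div g) + nat (\<bar>w2\<bar> div g) + nat (\<bar>w3\<bar> div g)"
  proof -
    obtain q1 where q1: "\<bar>w1\<bar> = g * q1" using g_dvd(1) by (metis dvd_abs_iff dvdE)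
    obtain q2 where q2: "\<bar>w2\<bar> = g * q2" using g_dvd(2) by (metis dvd_abs_iff dvdE)
    obtain q3 where q3: "\<bar>w3\<bar> = g * q3" using g_dvd(3) by (metis dvd_abs_iff dvdE)
    have gp: "g > 0" using g_pos .
    have "q1 \<ge> 0" "q2 \<ge> 0" "q3 \<ge> 0" using q1 q2 q3 gp by (metis abs_ge_zero zero_le_mult_iff not_less order.asym)+
    moreover have "MM = q1 + q2 + q3" unfolding MM_def q1 q2 q3 using gp
      by (metis distrib_left nonzero_mult_div_cancel_left not_less_iff_gr_or_eq)
    ultimately show ?thesis unfolding q1 q2 q3 using gp by (simp add: nat_add_distrib)
  qed
  then show ?thesis using A c1 c2 c3 Zcard by (auto split: if_splits)
qed

end


lemma floor_char:
  assumes "(kk::real) \<in> \<int>"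
  shows "(of_int \<lfloor>x\<rfloor> = kk \<and> x \<notin> \<int>) \<longleftrightarrow> (kk < x \<and> x < kk + 1)"
proof -
  obtain z where z: "kk = of_int z" using assms by (auto elim: Ints_cases)
  show ?thesis
  proof
    assume h: "of_int \<lfloor>x\<rfloor> = kk \<and> x \<notin> \<int>"
    then have "\<lfloor>x\<rfloor> = z" using z by simp
    then have "of_int z \<le> x" "x < of_int z + 1" by linarith+
    moreover have "x \<noteq> of_int z" using h by auto
    ultimately show "kk < x \<and> x < kk + 1" using z by auto
  next
    assume h: "kk < x \<and> x < kk + 1"
    then have "\<lfloor>x\<rfloor> = z" using z by linarith
    moreover have "x \<notin> \<int>"
    proof
      assume "x \<in> \<int>"
      then obtain m where "x = of_int m" by (auto elim: Ints_cases)
      then have "z < m" "m < z + 1" using h z by (simp_all del: of_int_add add: of_int_less_iff[symmetric])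
      then show False by linarith
    qed
    ultimately show "of_int \<lfloor>x\<rfloor> = kk \<and> x \<notin> \<int>" using z by simp
  qed
qed

lemma convex_strip:
  fixes f :: "'a::real_vector \<Rightarrow> real"
  assumes "\<And>x y (u::real) v. u + v = 1 \<Longrightarrow> f (u *\<^sub>R x + v *\<^sub>R y) = u * f x + v * f y"
  shows "convex {p. lo < f p \<and> f p < hi}"
proof (rule convexI)
  fix x y and u v :: real assume h: "x \<in> {p. lo < f p \<and> f p < hi}" "y \<in> {p. lo < f p \<and> f p < hi}" "0 \<le> u" "0 \<le> v" "u + v = 1"
  have e: "f (u *\<^sub>R x + v *\<^sub>R y) = u * f x + v * f y" using assms h(5) .
  have "u * f x + v * f y < hi" using h by (intro convex_bound_lt) auto
  moreover have "u * (- f x) + v * (- f y) < - lo" using h by (intro convex_bound_lt) auto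
  ultimately show "u *\<^sub>R x + v *\<^sub>R y \<in> {p. lo < f p \<and> f p < hi}" using e by simp
qed

lemma frac_shift:
  "(of_int a * frac x + of_int b * frac y - c \<in> \<int>) \<longleftrightarrow> (of_int a * x + of_int b * y - (c::real) \<in> \<int>)"
proof -
  have "of_int a * x + of_int b * y - c = (of_int a * frac x + of_int b * frac y - c) + of_int (a * \<lfloor>x\<rfloor> + b * \<lfloor>y\<rfloor>)"
    by (simp add: frac_def algebra_simps)
  then show ?thesis using Ints_add_iff[of "of_int (a * \<lfloor>x\<rfloor> + b * \<lfloor>y\<rfloor>)"] by (metis Ints_of_int)
qed

lemma frac_sub_int: "frac (x - of_int m) = frac (x::real)"
  using frac_add_of_int_right[of x "-m"] by simp

lemma torus_map_id: "q \<in> torus_space \<Longrightarrow> torus_map q = q"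
  by (auto simp: torus_map_def torus_space_def frac_eq prod_eq_iff)

lemma torus_map_shift: "torus_map p = p + (- of_int \<lfloor>fst p\<rfloor>, - of_int \<lfloor>snd p\<rfloor>)"
  by (simp add: torus_map_def frac_def prod_eq_iff)

lemma line_char:
  assumes "toric_line_of_type l a b"
  shows "\<exists>c. l = {q \<in> torus_space. of_int a * fst q + of_int b * snd q - c \<in> \<int>}"
proof -
  obtain c where c: "l = torus_map ` {p. of_int a * fst p + of_int b * snd p = c}" and cop: "coprime a b"
    using assms unfolding toric_line_of_type_def by blast
  have "l = {q \<in> torus_space. of_int a * fst q + of_int b * snd q - c \<in> \<int>}"
  proof
    show "l \<subseteq> {q \<in> torus_space. of_int a * fst q + of_int b * snd q - c \<in> \<int>}"
    proof
      fix q assume "q \<in> l"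
      then obtain p where p: "of_int a * fst p + of_int b * snd p = c" "q = torus_map p" using c by auto
      have "of_int a * fst p + of_int b * snd p - c \<in> \<int>" using p by simp
      then have "of_int a * frac (fst p) + of_int b * frac (snd p) - c \<in> \<int>" using frac_shift by blast
      then show "q \<in> {q \<in> torus_space. of_int a * fst q + of_int b * snd q - c \<in> \<int>}"
        using p torus_map_in by (simp add: torus_map_def)
    qed
    show "{q \<in> torus_space. of_int a * fst q + of_int b * snd q - c \<in> \<int>} \<subseteq> l"
    proof
      fix q assume "q \<in> {q \<in> torus_space. of_int a * fst q + of_int b * snd q - c \<in> \<int>}"
      then have q: "q \<in> torus_space" "of_int a * fst q + of_int b * snd q - c \<in> \<int>" by auto
      obtain n where n: "of_int a * fst q + of_int b * snd q - c = of_int n" using q(2) by (auto elim: Ints_cases)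
      obtain u v where uv: "u * a + v * b = gcd a b" using bezout_int by blast
      have g1: "gcd a b = 1" using cop by simp
      define p where "p = (fst q - of_int (u * n), snd q - of_int (v * n))"
      have "of_int a * fst p + of_int b * snd p = of_int a * fst q + of_int b * snd q - of_int ((u * a + v * b) * n)"
        unfolding p_def by (simp add: algebra_simps)
      then have pl: "of_int a * fst p + of_int b * snd p = c" using uv g1 n by simp
      have "torus_map p = q" using q(1) unfolding p_def torus_map_def torus_space_def
        by (auto simp del: of_int_mult simp add: prod_eq_iff frac_eq frac_sub_int)
      then show "q \<in> l" using c pl by auto
    qed
  qed
  then show ?thesis by blast
qed

lemma nonparallel_distinct:
  fixes a1 b1 a2 b2 :: int
  assumes "coprime a1 b1" "a1 * b2 \<noteq> a2 * b1"
  shows "{q \<in> torus_space. of_int a1 * fst q + of_int b1 * snd q - c1 \<in> \<int>}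
      \<noteq> {q \<in> torus_space. of_int a2 * fst q + of_int b2 * snd q - (c2::real) \<in> \<int>}"
proof
  assume eq: "{q \<in> torus_space. of_int a1 * fst q + of_int b1 * snd q - c1 \<in> \<int>}
      = {q \<in> torus_space. of_int a2 * fst q + of_int b2 * snd q - c2 \<in> \<int>}"
  define d where "d = real_of_int a1 * of_int b2 - of_int a2 * of_int b1"
  have dnz: "d \<noteq> 0" unfolding d_def using assms(2) by (metis eq_iff_diff_eq_0 of_int_eq_iff of_int_mult)
  obtain u v where uv: "u * a1 + v * b1 = 1" using bezout_int[of a1 b1] assms(1) by auto
  have uvr: "real_of_int u * of_int a1 + of_int v * of_int b1 = 1" using uv by (metis of_int_1 of_int_add of_int_mult)
  define P where "P t = (c1 * of_int u + t * of_int b1, c1 * of_int v - t * of_int a1)" for t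
  have onl: "of_int a1 * fst (P t) + of_int b1 * snd (P t) = c1" for t
  proof -
    have "of_int a1 * fst (P t) + of_int b1 * snd (P t) = c1 * (real_of_int u * of_int a1 + of_int v * of_int b1)"
      unfolding P_def by (simp add: algebra_simps)
    then show ?thesis using uvr by simp
  qed
  have in2: "of_int a2 * fst (P t) + of_int b2 * snd (P t) - c2 \<in> \<int>" for t
  proof -
    have "of_int a1 * fst (P t) + of_int b1 * snd (P t) - c1 \<in> \<int>" using onl by simp
    then have "of_int a1 * frac (fst (P t)) + of_int b1 * frac (snd (P t)) - c1 \<in> \<int>" using frac_shift by blast
    then have "torus_map (P t) \<in> {q \<in> torus_space. of_int a1 * fst q + of_int b1 * snd q - c1 \<in> \<int>}"
      using torus_map_in by (simp add: torus_map_def)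
    then have "torus_map (P t) \<in> {q \<in> torus_space. of_int a2 * fst q + of_int b2 * snd q - c2 \<in> \<int>}"
      using eq by simp
    then have "of_int a2 * frac (fst (P t)) + of_int b2 * frac (snd (P t)) - c2 \<in> \<int>" by (simp add: torus_map_def)
    then show ?thesis using frac_shift by blast
  qed
  have diff: "(of_int a2 * fst (P 0) + of_int b2 * snd (P 0) - c2) - (of_int a2 * fst (P t) + of_int b2 * snd (P t) - c2) = t * d" for t
    unfolding P_def d_def by (simp add: algebra_simps)
  have "(1/2::real) = (1 / (2 * d)) * d" using dnz by simp
  then have "(1/2::real) \<in> \<int>" using diff[of "1 / (2 * d)"] in2[of 0] in2[of "1 / (2 * d)"] by (metis Ints_diff)
  then obtain z where "(1/2::real) = of_int z" by (auto elim: Ints_cases)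
  then have "real_of_int (2 * z) = 1" by simp
  then have "2 * z = 1" by linarith
  then show False by presburger
qed



lemma unit_int_diff: "0 \<le> x \<Longrightarrow> x < 1 \<Longrightarrow> 0 \<le> y \<Longrightarrow> y < 1 \<Longrightarrow> x - y = of_int m \<Longrightarrow> x = (y::real)"
proof -
  assume h: "0 \<le> x" "x < 1" "0 \<le> y" "y < 1" "x - y = of_int m"
  then have "real_of_int (-1) < real_of_int m" "real_of_int m < real_of_int 1" by simp_all
  then have "-1 < m" "m < 1" by (simp_all only: of_int_less_iff)
  then have "m = 0" by linarith
  then have "x - y = 0" using h(5) by simp
  then show "x = y" by simp
qed

context arr3 begin

lemma Nl_int: "Nl (of_int m, of_int n) \<in> Lam" "Nl (of_int m, of_int n) \<in> Zc"
  unfolding Lam_def by (auto simp: Nl_def Zc_def)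

definition ish :: "real \<times> real \<Rightarrow> real \<times> real" where "ish p = (- of_int \<lfloor>fst p\<rfloor>, - of_int \<lfloor>snd p\<rfloor>)"

lemma ish_props: "torus_map p = p + ish p" "Nl (ish p) \<in> Lam" "Nl (ish p) \<in> Zc"
proof -
  show "torus_map p = p + ish p" unfolding ish_def by (rule torus_map_shift)
  have "ish p = (of_int (- \<lfloor>fst p\<rfloor>), of_int (- \<lfloor>snd p\<rfloor>))" unfolding ish_def by simp
  then show "Nl (ish p) \<in> Lam" "Nl (ish p) \<in> Zc" using Nl_int[of "- \<lfloor>fst p\<rfloor>" "- \<lfloor>snd p\<rfloor>"] by simp_all
qed

lemma int_shift:
  assumes "Nl v \<in> Zc"
  shows "(L1 (p + v) \<in> \<int>) = (L1 p \<in> \<int>)" "(L2 (p + v) \<in> \<int>) = (L2 p \<in> \<int>)" "(L3 (p + v) \<in> \<int>) = (L3 p \<in> \<int>)"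
  using Lcomp[of v "Nl v" p, OF refl] assms unfolding Zc_def by (simp_all add: Ints_add_iff)

lemma cls_Lam_add: "l \<in> Lam \<Longrightarrow> cls Lam (u + l) = cls Lam u"
  using cls_eq[OF sgrp_Lam] by simp

lemma vert_count:
  assumes V: "V = {q \<in> torus_space. (L1 q \<in> \<int> \<and> L2 q \<in> \<int>) \<or> (L1 q \<in> \<int> \<and> L3 q \<in> \<int>) \<or> (L2 q \<in> \<int> \<and> L3 q \<in> \<int>)}"
  shows "card V = card (cls Lam ` Xset)"
proof -
  define f where "f q = cls Lam (Lv q)" for q
  have inj: "inj_on f V"
  proof (rule inj_onI)
    fix q q' assume q: "q \<in> V" "q' \<in> V" "f q = f q'"
    then have "Lv q - Lv q' \<in> Lam" unfolding f_def using cls_eq[OF sgrp_Lam] by simp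
    then obtain m n where mn: "Lv q - Lv q' = Nl (of_int m, of_int n)" unfolding Lam_def by auto
    have "Lv q = Lv (q' + (q - q'))" by simp
    also have "\<dots> = Lv q' + Nl (q - q')" by (rule Lv_add)
    finally have "Nl (q - q') = Nl (of_int m, of_int n)" using mn by (simp add: algebra_simps)
    then have "q - q' = (of_int m, of_int n)" by (rule Nl_inj)
    then have "fst q - fst q' = of_int m" "snd q - snd q' = of_int n" by (auto simp: prod_eq_iff)
    moreover have "q \<in> torus_space" "q' \<in> torus_space" using q V by auto
    ultimately show "q = q'" unfolding torus_space_def
      by (auto simp: prod_eq_iff intro: unit_int_diff)
  qed
  have img: "f ` V = cls Lam ` Xset"
  proof
    show "f ` V \<subseteq> cls Lam ` Xset"
      unfolding f_def V Xset_def X1_def X2_def X3_def by auto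
    show "cls Lam ` Xset \<subseteq> f ` V"
    proof
      fix C assume "C \<in> cls Lam ` Xset"
      then obtain p where p: "C = cls Lam (Lv p)"
        "(L1 p \<in> \<int> \<and> L2 p \<in> \<int>) \<or> (L1 p \<in> \<int> \<and> L3 p \<in> \<int>) \<or> (L2 p \<in> \<int> \<and> L3 p \<in> \<int>)"
        unfolding Xset_def X1_def X2_def X3_def by auto
      define q where "q = torus_map p"
      have q: "q = p + ish p" unfolding q_def using ish_props by simp
      have "Lv q = Lv p + Nl (ish p)" unfolding q by (rule Lv_add)
      then have "f q = C" unfolding f_def p(1) using cls_Lam_add ish_props(2) by simp
      moreover have "q \<in> V"
      proof -
        have qt: "q \<in> torus_space" unfolding q_def by (rule torus_map_in)
        have "(L1 q \<in> \<int>) = (L1 p \<in> \<int>)" "(L2 q \<in> \<int>) = (L2 p \<in> \<int>)" "(L3 q \<in> \<int>) = (L3 p \<in> \<int>)"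
          unfolding q using int_shift[OF ish_props(3)] by blast+
        then show ?thesis unfolding V using qt p(2) by auto
      qed
      ultimately show "C \<in> f ` V" by blast
    qed
  qed
  show ?thesis using card_image[OF inj] img by simp
qed

definition "cell k = {p \<in> cmpl. floorv (Lv p) = k}"

lemma cell_alt:
  assumes "k \<in> Zc"
  shows "cell k = {p. fst k < L1 p \<and> L1 p < fst k + 1} \<inter> {p. fst (snd k) < L2 p \<and> L2 p < fst (snd k) + 1}
                 \<inter> {p. snd (snd k) < L3 p \<and> L3 p < snd (snd k) + 1}"
proof (rule set_eqI)
  fix p
  have k: "fst k \<in> \<int>" "fst (snd k) \<in> \<int>" "snd (snd k) \<in> \<int>" using assms unfolding Zc_def by auto
  have e: "floorv (Lv p) = k \<longleftrightarrow> (of_int \<lfloor>L1 p\<rfloor> = fst k \<and> of_int \<lfloor>L2 p\<rfloor> = fst (snd k) \<and> of_int \<lfloor>L3 p\<rfloor> = snd (snd k))"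
    by (auto simp: floorv_def Lv_def prod_eq_iff)
  have f1: "(of_int \<lfloor>L1 p\<rfloor> = fst k \<and> L1 p \<notin> \<int>) \<longleftrightarrow> (fst k < L1 p \<and> L1 p < fst k + 1)" by (rule floor_char[OF k(1)])
  have f2: "(of_int \<lfloor>L2 p\<rfloor> = fst (snd k) \<and> L2 p \<notin> \<int>) \<longleftrightarrow> (fst (snd k) < L2 p \<and> L2 p < fst (snd k) + 1)" by (rule floor_char[OF k(2)])
  have f3: "(of_int \<lfloor>L3 p\<rfloor> = snd (snd k) \<and> L3 p \<notin> \<int>) \<longleftrightarrow> (snd (snd k) < L3 p \<and> L3 p < snd (snd k) + 1)" by (rule floor_char[OF k(3)])
  show "p \<in> cell k \<longleftrightarrow> p \<in> {p. fst k < L1 p \<and> L1 p < fst k + 1} \<inter> {p. fst (snd k) < L2 p \<and> L2 p < fst (snd k) + 1}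
                 \<inter> {p. snd (snd k) < L3 p \<and> L3 p < snd (snd k) + 1}"
    unfolding cell_def cmpl_def mem_Collect_eq Int_iff e using f1 f2 f3 by blast
qed

lemma cell_open: "k \<in> Zc \<Longrightarrow> open (cell k)"
  unfolding cell_alt L1_def L2_def L3_def
  by (intro open_Int open_Collect_conj open_Collect_less continuous_intros)

lemma L_aff:
  assumes "u + v = 1"
  shows "L1 (u *\<^sub>R x + v *\<^sub>R y) = u * L1 x + v * L1 y" "L2 (u *\<^sub>R x + v *\<^sub>R y) = u * L2 x + v * L2 y"
    "L3 (u *\<^sub>R x + v *\<^sub>R y) = u * L3 x + v * L3 y"
proof -
  have "L1 (u *\<^sub>R x + v *\<^sub>R y) = u * L1 x + v * L1 y + (u + v - 1) * c1" by (simp add: L1_def algebra_simps)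
  then show "L1 (u *\<^sub>R x + v *\<^sub>R y) = u * L1 x + v * L1 y" using assms by simp
  have "L2 (u *\<^sub>R x + v *\<^sub>R y) = u * L2 x + v * L2 y + (u + v - 1) * c2" by (simp add: L2_def algebra_simps)
  then show "L2 (u *\<^sub>R x + v *\<^sub>R y) = u * L2 x + v * L2 y" using assms by simp
  have "L3 (u *\<^sub>R x + v *\<^sub>R y) = u * L3 x + v * L3 y + (u + v - 1) * c3" by (simp add: L3_def algebra_simps)
  then show "L3 (u *\<^sub>R x + v *\<^sub>R y) = u * L3 x + v * L3 y" using assms by simp
qed

lemma cell_convex: "k \<in> Zc \<Longrightarrow> convex (cell k)"
  unfolding cell_alt
  using L_aff by (intro convex_Int convex_strip) blast+

lemma chamber_count:
  assumes C: "C = {q \<in> torus_space. L1 q \<notin> \<int> \<and> L2 q \<notin> \<int> \<and> L3 q \<notin> \<int>}"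
  shows "card (connected_components_of (subtopology torus_top C)) = card (cls Lam ` Sset)"
proof -
  define f where "f q = cls Lam (floorv (Lv q))" for q
  have ts: "topspace (subtopology torus_top C) = C" using C topspace_torus by auto
  have tm: "torus_map p \<in> C \<longleftrightarrow> p \<in> cmpl" for p
  proof -
    have "(L1 (torus_map p) \<in> \<int>) = (L1 p \<in> \<int>)" "(L2 (torus_map p) \<in> \<int>) = (L2 p \<in> \<int>)" "(L3 (torus_map p) \<in> \<int>) = (L3 p \<in> \<int>)"
      unfolding ish_props(1)[of p] using int_shift[OF ish_props(3)] by blast+
    then show ?thesis unfolding C cmpl_def using torus_map_in[of p] by simp
  qed
  have tf: "f (torus_map p) = f p" for p
  proof -
    have "floorv (Lv (torus_map p)) = floorv (Lv p) + Nl (ish p)"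
      using ish_props(1)[of p] Lv_add[of p "ish p"] floorv_add[OF ish_props(3)] by simp
    then show ?thesis unfolding f_def using cls_Lam_add ish_props(2) by simp
  qed
  have fib_eq: "{y \<in> C. f y = f x} = torus_map ` cell (floorv (Lv x))" if x: "x \<in> C" for x
  proof
    show "torus_map ` cell (floorv (Lv x)) \<subseteq> {y \<in> C. f y = f x}"
    proof
      fix y assume "y \<in> torus_map ` cell (floorv (Lv x))"
      then obtain p where p: "p \<in> cell (floorv (Lv x))" "y = torus_map p" by auto
      have pc: "p \<in> cmpl" "floorv (Lv p) = floorv (Lv x)" using p(1) unfolding cell_def by auto
      then have "y \<in> C" using tm p(2) by simp
      moreover have "f y = f x" using p(2) tf pc(2) unfolding f_def by simp
      ultimately show "y \<in> {y \<in> C. f y = f x}" by simp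
    qed
    show "{y \<in> C. f y = f x} \<subseteq> torus_map ` cell (floorv (Lv x))"
    proof
      fix y assume y: "y \<in> {y \<in> C. f y = f x}"
      then have "floorv (Lv y) - floorv (Lv x) \<in> Lam" unfolding f_def using cls_eq[OF sgrp_Lam] by simp
      then obtain m n where mn: "floorv (Lv y) - floorv (Lv x) = Nl (of_int m, of_int n)" unfolding Lam_def by auto
      define p where "p = y + (of_int (-m), of_int (-n))"
      have nz: "Nl (of_int (-m), of_int (-n)) \<in> Zc" using Nl_int by blast
      have "Nl (of_int (-m), of_int (-n)) = - Nl (of_int m, of_int n)" by (simp add: Nl_def)
      then have "floorv (Lv p) = floorv (Lv y) - Nl (of_int m, of_int n)"
        unfolding p_def Lv_add floorv_add[OF nz] by simp
      then have "floorv (Lv p) = floorv (Lv x)" using mn by (simp add: algebra_simps)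
      moreover have "p \<in> cmpl" using y int_shift[OF nz, of y] unfolding p_def C cmpl_def by simp
      moreover have "torus_map p = y"
      proof -
        have yt: "0 \<le> fst y" "fst y < 1" "0 \<le> snd y" "snd y < 1" using y unfolding C torus_space_def by auto
        show ?thesis unfolding p_def torus_map_def using yt by (simp del: of_int_minus add: frac_eq prod_eq_iff)
      qed

      ultimately show "y \<in> torus_map ` cell (floorv (Lv x))" unfolding cell_def by auto
    qed
  qed
  have op: "openin (subtopology torus_top C) {y \<in> topspace (subtopology torus_top C). f y = f x}"
    if "x \<in> topspace (subtopology torus_top C)" for x
  proof -
    let ?F = "{y \<in> C. f y = f x}"
    have pre: "torus_map -` ?F = {p \<in> cmpl. f p = f x}"
    proof (rule set_eqI)
      fix p show "p \<in> torus_map -` ?F \<longleftrightarrow> p \<in> {p \<in> cmpl. f p = f x}" using tm[of p] tf[of p] by simp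
    qed
    have "open {p \<in> cmpl. f p = f x}"
    proof (subst open_subopen, intro ballI)
      fix p0 assume p0: "p0 \<in> {p \<in> cmpl. f p = f x}"
      have "open (cell (floorv (Lv p0)))" using cell_open floorv_Zc by blast
      moreover have "p0 \<in> cell (floorv (Lv p0))" using p0 unfolding cell_def by auto
      moreover have "cell (floorv (Lv p0)) \<subseteq> {p \<in> cmpl. f p = f x}"
      proof
        fix p assume "p \<in> cell (floorv (Lv p0))"
        then have "p \<in> cmpl" "floorv (Lv p) = floorv (Lv p0)" unfolding cell_def by auto
        then show "p \<in> {p \<in> cmpl. f p = f x}" using p0 unfolding f_def by simp
      qed
      ultimately show "\<exists>T. open T \<and> p0 \<in> T \<and> T \<subseteq> {p \<in> cmpl. f p = f x}" by blast
    qed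
    moreover have "?F \<subseteq> torus_space" using C by auto
    ultimately have "openin torus_top ?F" unfolding openin_torus pre by simp
    then show ?thesis unfolding ts openin_subtopology by (intro exI[of _ ?F]) auto
  qed
  have co: "connectedin (subtopology torus_top C) {y \<in> topspace (subtopology torus_top C). f y = f x}"
    if "x \<in> topspace (subtopology torus_top C)" for x
  proof -
    have x: "x \<in> C" using that ts by simp
    have "connected (cell (floorv (Lv x)))" using cell_convex floorv_Zc convex_connected by blast
    then have "connectedin torus_top (torus_map ` cell (floorv (Lv x)))"
      using connectedin_continuous_map_image[OF cont_torus_map] by simp
    then have "connectedin torus_top {y \<in> C. f y = f x}" using fib_eq[OF x] by simp
    then show ?thesis unfolding ts by (simp add: connectedin_subtopology)
  qed
  have "card (connected_components_of (subtopology torus_top C)) = card (f ` topspace (subtopology torus_top C))"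
    by (rule components_fibers[OF op co])
  also have "f ` topspace (subtopology torus_top C) = cls Lam ` Sset"
  proof
    show "f ` topspace (subtopology torus_top C) \<subseteq> cls Lam ` Sset"
      unfolding ts
    proof
      fix D assume "D \<in> f ` C"
      then obtain q where q: "q \<in> C" "D = f q" by auto
      then have "q \<in> cmpl" unfolding C cmpl_def by auto
      then show "D \<in> cls Lam ` Sset" unfolding q(2) f_def Sset_def by auto
    qed
    show "cls Lam ` Sset \<subseteq> f ` topspace (subtopology torus_top C)"
    proof
      fix D assume "D \<in> cls Lam ` Sset"
      then obtain p where p: "p \<in> cmpl" "D = f p" unfolding Sset_def f_def by auto
      then have "torus_map p \<in> C" "f (torus_map p) = D" using tm tf by auto
      then show "D \<in> f ` topspace (subtopology torus_top C)" unfolding ts by blast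
    qed
  qed
  finally show ?thesis .
qed

end


lemma three_pairs:
  "x \<noteq> y \<Longrightarrow> x \<noteq> z \<Longrightarrow> y \<noteq> z \<Longrightarrow>
   (\<exists>a\<in>{x,y,z}. \<exists>b\<in>{x,y,z}. a \<noteq> b \<and> q \<in> a \<and> q \<in> b) \<longleftrightarrow> (q \<in> x \<and> q \<in> y) \<or> (q \<in> x \<and> q \<in> z) \<or> (q \<in> y \<and> q \<in> z)"
  by blast

theorem mainTheorem9:
  fixes A :: "(real \<times> real) set set"
  assumes "toric_arrangement A"
    and "card A = 3"
    and "f0 A < f2 A"
    and "f2 A < 2 * f0 A"
  shows "(f2 A - f0 A) dvd f0 A"
proof -
  obtain l1 l2 a1 b1 a2 b2 where l12: "l1 \<in> A" "l2 \<in> A" "toric_line_of_type l1 a1 b1"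
      "toric_line_of_type l2 a2 b2" "a1 * b2 \<noteq> a2 * b1"
    using assms(1) unfolding toric_arrangement_def by blast
  have finA: "finite A" using assms(1) unfolding toric_arrangement_def by blast
  obtain c1 where c1: "l1 = {q \<in> torus_space. of_int a1 * fst q + of_int b1 * snd q - c1 \<in> \<int>}"
    using line_char[OF l12(3)] by blast
  obtain c2 where c2: "l2 = {q \<in> torus_space. of_int a2 * fst q + of_int b2 * snd q - c2 \<in> \<int>}"
    using line_char[OF l12(4)] by blast
  have cop1: "coprime a1 b1" using l12(3) unfolding toric_line_of_type_def by blast
  have n12: "l1 \<noteq> l2" unfolding c1 c2 by (rule nonparallel_distinct[OF cop1 l12(5)])
  have "card {l1, l2} = 2" using n12 by simp
  then have "card (A - {l1, l2}) = 1" using assms(2) l12(1,2) by (simp add: card_Diff_subset)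
  then obtain l3 where l3: "A - {l1, l2} = {l3}" by (rule card_1_singletonE)
  then have l3A: "l3 \<in> A" "l3 \<noteq> l1" "l3 \<noteq> l2" by auto
  have Aeq: "A = {l1, l2, l3}" using l3 l12(1,2) by auto
  have "toric_line l3" using assms(1) l3A unfolding toric_arrangement_def by blast
  then obtain a3 b3 where "toric_line_of_type l3 a3 b3" unfolding toric_line_def by blast
  then obtain c3 where c3: "l3 = {q \<in> torus_space. of_int a3 * fst q + of_int b3 * snd q - c3 \<in> \<int>}"
    using line_char by blast
  interpret R: arr3 a1 b1 a2 b2 a3 b3 c1 c2 c3
    by unfold_locales (use l12(5) in simp)
  have e1: "l1 = {q \<in> torus_space. R.L1 q \<in> \<int>}" unfolding c1 R.L1_def ..
  have e2: "l2 = {q \<in> torus_space. R.L2 q \<in> \<int>}" unfolding c2 R.L2_def ..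
  have e3: "l3 = {q \<in> torus_space. R.L3 q \<in> \<int>}" unfolding c3 R.L3_def ..
  have V: "arr_vertices A = {q \<in> torus_space. (R.L1 q \<in> \<int> \<and> R.L2 q \<in> \<int>) \<or> (R.L1 q \<in> \<int> \<and> R.L3 q \<in> \<int>) \<or> (R.L2 q \<in> \<int> \<and> R.L3 q \<in> \<int>)}"
  proof (rule set_eqI)
    fix q
    have "q \<in> arr_vertices A \<longleftrightarrow> q \<in> torus_space \<and> ((q \<in> l1 \<and> q \<in> l2) \<or> (q \<in> l1 \<and> q \<in> l3) \<or> (q \<in> l2 \<and> q \<in> l3))"
      unfolding arr_vertices_def Aeq mem_Collect_eq three_pairs[OF n12 l3A(2)[symmetric] l3A(3)[symmetric]] by (rule refl)
    then show "q \<in> arr_vertices A \<longleftrightarrow> q \<in> {q \<in> torus_space. (R.L1 q \<in> \<int> \<and> R.L2 q \<in> \<int>) \<or> (R.L1 q \<in> \<int> \<and> R.L3 q \<in> \<int>) \<or> (R.L2 q \<in> \<int> \<and> R.L3 q \<in> \<int>)}"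
      unfolding e1 e2 e3 mem_Collect_eq by argo
  qed
  have f0e: "f0 A = card (cls R.Lam ` R.Xset)" unfolding f0_def by (rule R.vert_count[OF V])
  have Ce: "torus_space - \<Union>A = {q \<in> torus_space. R.L1 q \<notin> \<int> \<and> R.L2 q \<notin> \<int> \<and> R.L3 q \<notin> \<int>}"
  proof (rule set_eqI)
    fix q
    have "q \<in> torus_space - \<Union>A \<longleftrightarrow> q \<in> torus_space \<and> q \<notin> l1 \<and> q \<notin> l2 \<and> q \<notin> l3" unfolding Aeq by simp
    then show "q \<in> torus_space - \<Union>A \<longleftrightarrow> q \<in> {q \<in> torus_space. R.L1 q \<notin> \<int> \<and> R.L2 q \<notin> \<int> \<and> R.L3 q \<notin> \<int>}"
      unfolding e1 e2 e3 mem_Collect_eq by argo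
  qed
  have f2e: "f2 A = card (cls R.Lam ` R.Sset)" unfolding f2_def arr_chambers_def
    by (rule R.chamber_count[OF Ce])
  have f0p: "f0 A > 0" using assms(3,4) by linarith
  have f2p: "f2 A > 0" using assms(3) by linarith
  have finX: "finite (cls R.Lam ` R.Xset)" using f0p f0e card_ge_0_finite by metis
  have finS: "finite (cls R.Lam ` R.Sset)" using f2p f2e card_ge_0_finite by metis
  define io where "io = card (cls R.Lam ` R.KK)"
  define s' where "s' = card (cls R.KK ` R.Sset)"
  define x' where "x' = card (cls R.KK ` R.Xset)"
  have F2: "f2 A = io * s'" unfolding f2e io_def s'_def
    by (rule card_cls_factor[OF R.sgrp_Lam R.sgrp_KK R.Lam_KK R.Sset_inv finS])
  have F0: "f0 A = io * x'" unfolding f0e io_def x'_def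
    by (rule card_cls_factor[OF R.sgrp_Lam R.sgrp_KK R.Lam_KK R.Xset_inv finX])
  have "x' > 0" using F0 f0p by simp
  then have finX': "finite (cls R.KK ` R.Xset)" unfolding x'_def using card_ge_0_finite by blast
  have SB: "s' + (if R.alpha \<in> \<int> then 1 else 0) \<le> nat R.MM" unfolding s'_def by (rule R.S_bound)
  have XB: "nat R.MM \<le> x' + (if R.alpha \<in> \<int> then 2 else 0)" unfolding x'_def by (rule R.X_bound[OF finX'])
  have le: "s' \<le> x' + 1" using SB XB by (auto split: if_splits)
  have "io * x' < io * s'" using assms(3) F0 F2 by simp
  then have "x' < s'" by simp
  then have "s' = x' + 1" using le by simp
  then have "f2 A - f0 A = io" using F0 F2 by simp
  then show ?thesis using F0 by simp
qed


end
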